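(* Let $(\Sigma,\partial\Sigma)$ be a weighted metric graph with boundary. For all $\omega=(f_e\,d't_e)\in\mathcal A^{1,0}(\Sigma,\partial\Sigma)$ and $\eta=(g_e\,d''t_e)\in\mathcal A^{0,1}(\Sigma,\partial\Sigma)$ we have $\int_\Sigma d''\omega=\int_{\partial\Sigma}\omega$ and $\int_\Sigma d'\eta=\int_{\partial\Sigma}\eta$.
   Context: A weighted metric graph with boundary $(\Sigma,\partial\Sigma)$: finite multigraph without loop edges, with for each oriented edge $e$ (tail $e^-$, head $e^+$) a length $\ell(e)>0$, parametrization $t_e\colon[0,\ell(e)]\to e$, $t_e(0)=e^-$, $t_{\bar e}(x)=t_e(\ell(e)-x)$, weight $w(e)=w(\bar e)\in\mathbb Z_{>0}$, boundary $\partial\Sigma\subset V(\Sigma)$. Smooth $(1,0)$-forms $(f_e\,d't_e)$ (resp. $(0,1)$-forms $(g_e\,d''t_e)$): families of smooth functions $f_e$ on edges (smooth meaning $f_e\circ t_e$ smooth on the closed interval) with $f_{\bar e}=-f_e$, such that at each vertex $v\notin\partial\Sigma$: if $v$ has valency 1, $f_e$ vanishes near $v$; if $v$ has valency 2 with outgoing edges $e_1,e_2$, then $w(e_1)^{n+1}\frac{d^nf_{e_1}}{dt_{e_1}^n}(v)=-(-1)^nw(e_2)^{n+1}\frac{d^nf_{e_2}}{dt_{e_2}^n}(v)$ for all $n\ge 0$; if valency $\ge3$, $\sum_{e^-=v}w(e)f_e(v)=0$. Operators: $d''(f_e\,d't_e)=(-\frac{df_e}{dt_e}\,d't_ed''t_e)$,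 $d'(g_e\,d''t_e)=(\frac{dg_e}{dt_e}\,d't_ed''t_e)$, where $\frac{d}{dt_e}$ is derivative of the function composed with $t_e$. Integrals: $\int_\Sigma(f_e\,d't_ed''t_e)=\frac12\sum_{e\text{ oriented}}w(e)\int_0^{\ell(e)}f_e\circ t_e(x)\,dx$; $\int_{\partial\Sigma}(f_e\,d't_e)=\sum_{v\in\partial\Sigma}\sum_{e^-=v}w(e)f_e(v)$; $\int_{\partial\Sigma}(g_e\,d''t_e)=\sum_{v\in\partial\Sigma}\sum_{e^+=v}w(e)g_e(v)$. *)

theory Defs
  imports "HOL-Analysis.Analysis"
begin

text \<open>Oriented edges form the set E of type 'e;
  tlv/hdv give tail and head, rv the reversed edge (e bar), len the length, w the weight,
  B the boundary vertex set. Functions on an edge e are represented through the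
  parametrization t_e, i.e. as real functions on the interval [0, len e].\<close>

definition wmgraph ::
  "'v set \<Rightarrow> 'e set \<Rightarrow> ('e \<Rightarrow> 'v) \<Rightarrow> ('e \<Rightarrow> 'v) \<Rightarrow> ('e \<Rightarrow> 'e) \<Rightarrow> ('e \<Rightarrow> real)
   \<Rightarrow> ('e \<Rightarrow> nat) \<Rightarrow> 'v set \<Rightarrow> bool" where
  "wmgraph V E tlv hdv rv len w B \<longleftrightarrow>
     finite V \<and> finite E \<and> B \<subseteq> V \<and>
     (\<forall>e\<in>E. tlv e \<in> V \<and> hdv e \<in> V \<and> tlv e \<noteq> hdv e \<and>
        rv e \<in> E \<and> rv (rv e) = e \<and> tlv (rv e) = hdv e \<and> hdv (rv e) = tlv e \<and>
        len e > 0 \<and> len (rv e) = len e \<and> w e > 0 \<and> w (rv e) = w e)"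

fun dnth :: "real \<Rightarrow> (real \<Rightarrow> real) \<Rightarrow> nat \<Rightarrow> real \<Rightarrow> real" where
  "dnth l f 0 = f"
| "dnth l f (Suc n) = (\<lambda>x. SOME d. (dnth l f n has_real_derivative d) (at x within {0..l}))"

definition smooth_cl :: "real \<Rightarrow> (real \<Rightarrow> real) \<Rightarrow> bool" where
  "smooth_cl l f \<longleftrightarrow>
     (\<forall>n. \<forall>x\<in>{0..l}. (dnth l f n has_real_derivative dnth l f (Suc n) x) (at x within {0..l}))"

definition valency :: "'e set \<Rightarrow> ('e \<Rightarrow> 'v) \<Rightarrow> 'v \<Rightarrow> nat" where
  "valency E tlv v = card {e\<in>E. tlv e = v}"

text \<open>Smooth (1,0)-forms (resp. (0,1)-forms; same conditions) on (Sigma, boundary):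
  F e x = f_e(t_e(x)).\<close>
definition is_form ::
  "'v set \<Rightarrow> 'e set \<Rightarrow> ('e \<Rightarrow> 'v) \<Rightarrow> ('e \<Rightarrow> 'v) \<Rightarrow> ('e \<Rightarrow> 'e) \<Rightarrow> ('e \<Rightarrow> real)
   \<Rightarrow> ('e \<Rightarrow> nat) \<Rightarrow> 'v set \<Rightarrow> ('e \<Rightarrow> real \<Rightarrow> real) \<Rightarrow> bool" where
  "is_form V E tlv hdv rv len w B F \<longleftrightarrow>
     (\<forall>e\<in>E. smooth_cl (len e) (F e)) \<and>
     (\<forall>e\<in>E. \<forall>x\<in>{0..len e}. F (rv e) x = - F e (len e - x)) \<and>
     (\<forall>v\<in>V - B.
        (valency E tlv v = 1 \<longrightarrow>
           (\<forall>e\<in>E. tlv e = v \<longrightarrow> (\<exists>\<epsilon>>0. \<forall>x\<in>{0..len e}. x < \<epsilon> \<longrightarrow> F e x = 0))) \<and>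
        (valency E tlv v = 2 \<longrightarrow>
           (\<forall>e1\<in>E. \<forall>e2\<in>E. tlv e1 = v \<longrightarrow> tlv e2 = v \<longrightarrow> e1 \<noteq> e2 \<longrightarrow>
              (\<forall>n. real (w e1) ^ (n+1) * dnth (len e1) (F e1) n 0
                   = - ((-1) ^ n * real (w e2) ^ (n+1) * dnth (len e2) (F e2) n 0)))) \<and>
        (valency E tlv v \<ge> 3 \<longrightarrow> (\<Sum>e\<in>{e\<in>E. tlv e = v}. real (w e) * F e 0) = 0))"

text \<open>Integral over Sigma of a (1,1)-form (h_e d't_e d''t_e).\<close>
definition int_Sigma :: "'e set \<Rightarrow> ('e \<Rightarrow> real) \<Rightarrow> ('e \<Rightarrow> nat) \<Rightarrow> ('e \<Rightarrow> real \<Rightarrow> real) \<Rightarrow> real" where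
  "int_Sigma E len w H = (1/2) * (\<Sum>e\<in>E. real (w e) * integral {0..len e} (H e))"

text \<open>d''(f_e d't_e) = (- df_e/dt_e d't_e d''t_e), d'(g_e d''t_e) = (dg_e/dt_e d't_e d''t_e).\<close>
definition d2 :: "('e \<Rightarrow> real) \<Rightarrow> ('e \<Rightarrow> real \<Rightarrow> real) \<Rightarrow> 'e \<Rightarrow> real \<Rightarrow> real" where
  "d2 len F = (\<lambda>e x. - dnth (len e) (F e) 1 x)"

definition d1 :: "('e \<Rightarrow> real) \<Rightarrow> ('e \<Rightarrow> real \<Rightarrow> real) \<Rightarrow> 'e \<Rightarrow> real \<Rightarrow> real" where
  "d1 len G = (\<lambda>e x. dnth (len e) (G e) 1 x)"

definition int_bd10 :: "'e set \<Rightarrow> ('e \<Rightarrow> 'v) \<Rightarrow> ('e \<Rightarrow> nat) \<Rightarrow> 'v set \<Rightarrow> ('e \<Rightarrow> real \<Rightarrow> real) \<Rightarrow> real" where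
  "int_bd10 E tlv w B F = (\<Sum>v\<in>B. \<Sum>e\<in>{e\<in>E. tlv e = v}. real (w e) * F e 0)"

definition int_bd01 :: "'e set \<Rightarrow> ('e \<Rightarrow> 'v) \<Rightarrow> ('e \<Rightarrow> real) \<Rightarrow> ('e \<Rightarrow> nat) \<Rightarrow> 'v set \<Rightarrow> ('e \<Rightarrow> real \<Rightarrow> real) \<Rightarrow> real" where
  "int_bd01 E hdv len w B G = (\<Sum>v\<in>B. \<Sum>e\<in>{e\<in>E. hdv e = v}. real (w e) * G e (len e))"

end

theory Submission
  imports Defs
begin

declare dnth.simps(2)[simp del]

lemma ftc_dnth:
  assumes "smooth_cl l f" "l \<ge> 0"
  shows "integral {0..l} (dnth l f 1) = f l - f 0"
proof -
  have "\<And>x. x \<in> {0..l} \<Longrightarrow> (f has_vector_derivative dnth l f 1 x) (at x within {0..l})"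
    using assms(1) unfolding smooth_cl_def
    by (metis One_nat_def dnth.simps(1) has_real_derivative_iff_has_vector_derivative)
  from fundamental_theorem_of_calculus[OF assms(2) this] show ?thesis
    by (rule integral_unique)
qed

lemma vertex_zero:
  assumes wm: "wmgraph V E tlv hdv rv len w B"
    and fm: "is_form V E tlv hdv rv len w B F"
    and v: "v \<in> V" "v \<notin> B"
  shows "(\<Sum>e\<in>{e\<in>E. tlv e = v}. real (w e) * F e 0) = 0"
proof -
  define S where "S = {e\<in>E. tlv e = v}"
  have fin: "finite S" using wm unfolding wmgraph_def S_def by auto
  have vc: "valency E tlv v = card S" unfolding valency_def S_def by simp
  have vb: "v \<in> V - B" using v by auto
  consider "card S = 0" | "card S = 1" | "card S = 2" | "card S \<ge> 3" by linarith
  then show ?thesis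
  proof cases
    case 1
    then have "S = {}" using fin by simp
    then show ?thesis unfolding S_def[symmetric] by simp
  next
    case 2
    then obtain e where Se: "S = {e}" by (meson card_1_singletonE)
    then have eE: "e \<in> E" "tlv e = v" unfolding S_def by auto
    have "\<exists>\<epsilon>>0. \<forall>x\<in>{0..len e}. x < \<epsilon> \<longrightarrow> F e x = 0"
      using fm vb 2 eE vc unfolding is_form_def by auto
    moreover have "len e > 0" using wm eE unfolding wmgraph_def by auto
    ultimately have "F e 0 = 0" by force
    then show ?thesis unfolding S_def[symmetric] Se by simp
  next
    case 3
    then obtain e1 e2 where Se: "S = {e1, e2}" "e1 \<noteq> e2" by (meson card_2_iff)
    then have eE: "e1 \<in> E" "tlv e1 = v" "e2 \<in> E" "tlv e2 = v" unfolding S_def by auto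
    have all: "\<forall>v\<in>V - B.
        (valency E tlv v = 1 \<longrightarrow>
           (\<forall>e\<in>E. tlv e = v \<longrightarrow> (\<exists>\<epsilon>>0. \<forall>x\<in>{0..len e}. x < \<epsilon> \<longrightarrow> F e x = 0))) \<and>
        (valency E tlv v = 2 \<longrightarrow>
           (\<forall>e1\<in>E. \<forall>e2\<in>E. tlv e1 = v \<longrightarrow> tlv e2 = v \<longrightarrow> e1 \<noteq> e2 \<longrightarrow>
              (\<forall>n. real (w e1) ^ (n+1) * dnth (len e1) (F e1) n 0
                   = - ((-1) ^ n * real (w e2) ^ (n+1) * dnth (len e2) (F e2) n 0)))) \<and>
        (valency E tlv v \<ge> 3 \<longrightarrow> (\<Sum>e\<in>{e\<in>E. tlv e = v}. real (w e) * F e 0) = 0)"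
      using fm unfolding is_form_def by blast
    have v2: "valency E tlv v = 2" using 3 vc by simp
    have "real (w e1) ^ (0+1) * dnth (len e1) (F e1) 0 0
                   = - ((-1) ^ 0 * real (w e2) ^ (0+1) * dnth (len e2) (F e2) 0 0)"
      using conjunct2[OF bspec[OF all vb], THEN conjunct1, rule_format, OF v2 eE(1) eE(3) eE(2) eE(4) Se(2)] .
    then have "real (w e1) * F e1 0 + real (w e2) * F e2 0 = 0" by simp
    then show ?thesis unfolding S_def[symmetric] Se using Se(2) by simp
  next
    case 4
    then show ?thesis using fm vb vc unfolding is_form_def S_def by auto
  qed
qed

lemma total_tail:
  assumes wm: "wmgraph V E tlv hdv rv len w B"
    and fm: "is_form V E tlv hdv rv len w B F"
  shows "(\<Sum>e\<in>E. real (w e) * F e 0) = int_bd10 E tlv w B F"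
proof -
  have fV: "finite V" "finite E" "B \<subseteq> V" and tl: "tlv ` E \<subseteq> V"
    using wm unfolding wmgraph_def by auto
  have "(\<Sum>e\<in>E. real (w e) * F e 0) = (\<Sum>v\<in>V. \<Sum>e\<in>{e\<in>E. tlv e = v}. real (w e) * F e 0)"
    using sum.group[OF fV(2) fV(1) tl, of "\<lambda>e. real (w e) * F e 0"] by simp
  also have "\<dots> = (\<Sum>v\<in>B. \<Sum>e\<in>{e\<in>E. tlv e = v}. real (w e) * F e 0)"
    using vertex_zero[OF wm fm] fV
    by (intro sum.mono_neutral_right) auto
  finally show ?thesis unfolding int_bd10_def .
qed

lemma bij_rv:
  assumes wm: "wmgraph V E tlv hdv rv len w B"
  shows "bij_betw rv E E"
proof -
  have h: "\<And>e. e \<in> E \<Longrightarrow> rv e \<in> E \<and> rv (rv e) = e" using wm unfolding wmgraph_def by auto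
  show ?thesis
    by (rule bij_betw_byWitness[where f'=rv]) (use h in auto)
qed

theorem theorem2p15:
  fixes V :: "'v set" and E :: "'e set" and tlv hdv :: "'e \<Rightarrow> 'v" and rv :: "'e \<Rightarrow> 'e"
    and len :: "'e \<Rightarrow> real" and w :: "'e \<Rightarrow> nat" and B :: "'v set"
    and F G :: "'e \<Rightarrow> real \<Rightarrow> real"
  assumes "wmgraph V E tlv hdv rv len w B"
    and "is_form V E tlv hdv rv len w B F"
    and "is_form V E tlv hdv rv len w B G"
  shows "int_Sigma E len w (d2 len F) = int_bd10 E tlv w B F
       \<and> int_Sigma E len w (d1 len G) = int_bd01 E hdv len w B G"
proof
  note wm = assms(1)
  have ge: "\<And>e. e \<in> E \<Longrightarrow> rv e \<in> E \<and> rv (rv e) = e \<and> tlv (rv e) = hdv e \<and> hdv (rv e) = tlv e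
        \<and> len e > 0 \<and> len (rv e) = len e \<and> w (rv e) = w e"
    using wm unfolding wmgraph_def by auto
  have bij: "bij_betw rv E E" by (rule bij_rv[OF wm])
  have ftc: "\<And>H e. is_form V E tlv hdv rv len w B H \<Longrightarrow> e \<in> E \<Longrightarrow>
      integral {0..len e} (dnth (len e) (H e) 1) = H e (len e) - H e 0"
    using ge unfolding is_form_def by (intro ftc_dnth) (auto simp: less_imp_le)
  have rflx: "\<And>H e. is_form V E tlv hdv rv len w B H \<Longrightarrow> e \<in> E \<Longrightarrow>
      H (rv e) 0 = - H e (len e)"
  proof -
    fix H e assume "is_form V E tlv hdv rv len w B H" "e \<in> E"
    then show "H (rv e) 0 = - H e (len e)" using ge[of e] unfolding is_form_def
      by (metis atLeastAtMost_iff diff_zero le_less order_refl)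
  qed
  have reidx: "\<And>h. (\<Sum>e\<in>E. h (rv e)) = (\<Sum>e\<in>E. (h e :: real))"
    using sum.reindex_bij_betw[OF bij] by blast
  show "int_Sigma E len w (d2 len F) = int_bd10 E tlv w B F"
  proof -
    have "(\<Sum>e\<in>E. real (w e) * integral {0..len e} (d2 len F e))
        = (\<Sum>e\<in>E. real (w e) * F e 0 + real (w (rv e)) * F (rv e) 0)"
    proof (rule sum.cong[OF refl])
      fix e assume e: "e \<in> E"
      have I: "integral {0..len e} (d2 len F e) = - (F e (len e) - F e 0)"
        unfolding d2_def integral_neg ftc[OF assms(2) e] ..
      show "real (w e) * integral {0..len e} (d2 len F e) = real (w e) * F e 0 + real (w (rv e)) * F (rv e) 0"
        unfolding I using rflx[OF assms(2) e] ge[OF e] by (simp add: algebra_simps)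
    qed
    also have "\<dots> = 2 * (\<Sum>e\<in>E. real (w e) * F e 0)"
      using reidx[of "\<lambda>e. real (w e) * F e 0"] by (simp add: sum.distrib)
    finally show ?thesis using total_tail[OF wm assms(2)] unfolding int_Sigma_def by simp
  qed
  show "int_Sigma E len w (d1 len G) = int_bd01 E hdv len w B G"
  proof -
    have "(\<Sum>e\<in>E. real (w e) * integral {0..len e} (d1 len G e))
        = (\<Sum>e\<in>E. - (real (w e) * G e 0) - real (w (rv e)) * G (rv e) 0)"
    proof (rule sum.cong[OF refl])
      fix e assume e: "e \<in> E"
      have I: "integral {0..len e} (d1 len G e) = G e (len e) - G e 0"
        unfolding d1_def ftc[OF assms(3) e] ..
      show "real (w e) * integral {0..len e} (d1 len G e) = - (real (w e) * G e 0) - real (w (rv e)) * G (rv e) 0"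
        unfolding I using rflx[OF assms(3) e] ge[OF e] by (simp add: algebra_simps)
    qed
    also have "\<dots> = - 2 * (\<Sum>e\<in>E. real (w e) * G e 0)"
      using reidx[of "\<lambda>e. real (w e) * G e 0"] by (simp add: sum_subtractf sum_negf)
    finally have A: "int_Sigma E len w (d1 len G) = - (\<Sum>e\<in>E. real (w e) * G e 0)"
      unfolding int_Sigma_def by simp
    have fV: "finite V" "finite E" "B \<subseteq> V" using wm unfolding wmgraph_def by auto
    have "int_bd01 E hdv len w B G = (\<Sum>v\<in>B. \<Sum>e\<in>{e\<in>E. hdv e = v}. real (w e) * G e (len e))"
      unfolding int_bd01_def ..
    also have "\<dots> = (\<Sum>v\<in>B. \<Sum>e\<in>{e\<in>E. tlv e = v}. - (real (w e) * G e 0))"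
    proof (rule sum.cong[OF refl])
      fix v assume "v \<in> B"
      have bj: "bij_betw rv {e\<in>E. tlv e = v} {e\<in>E. hdv e = v}"
        by (rule bij_betw_byWitness[where f'=rv]) (use ge in auto)
      have "(\<Sum>e\<in>{e\<in>E. hdv e = v}. real (w e) * G e (len e))
          = (\<Sum>e\<in>{e\<in>E. tlv e = v}. real (w (rv e)) * G (rv e) (len (rv e)))"
        using sum.reindex_bij_betw[OF bj, of "\<lambda>e. real (w e) * G e (len e)"] by simp
      also have "\<dots> = (\<Sum>e\<in>{e\<in>E. tlv e = v}. - (real (w e) * G e 0))"
      proof (rule sum.cong[OF refl])
        fix e assume "e \<in> {e\<in>E. tlv e = v}"
        then have eE: "e \<in> E" by simp
        have "G (rv (rv e)) 0 = - G (rv e) (len (rv e))" using ge[OF eE] by (intro rflx[OF assms(3)]) auto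
        then show "real (w (rv e)) * G (rv e) (len (rv e)) = - (real (w e) * G e 0)"
          using ge[OF eE] by simp
      qed
      finally show "(\<Sum>e\<in>{e\<in>E. hdv e = v}. real (w e) * G e (len e))
          = (\<Sum>e\<in>{e\<in>E. tlv e = v}. - (real (w e) * G e 0))" .
    qed
    also have "\<dots> = - int_bd10 E tlv w B G" unfolding int_bd10_def by (simp add: sum_negf)
    finally show ?thesis using A total_tail[OF wm assms(3)] by simp
  qed
qed

end
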